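(* Let $\lambda\in\mathbb{F}$ with $\lambda\neq0,1$, and let $0\le\delta\le1-q^{-1}$. Then $$\mathcal{D}_\lambda^{\le\delta}\subseteq\bigcup_{\mu_q(n)\le\ell<n}\ \bigcup_{J\in\Omega_\ell}\ \bigcup_{(a,b)\in(\tilde J^*\times\tilde J^* )^{\le\delta}}\mathcal{D}_{a,b}.$$
   Context: Let $q$ be a prime power, $\mathbb{F}=\mathbb{F}_{q^2}$, $G$ a finite abelian group of odd order $n$ with $\gcd(n,q)=1$, and $\mathbb{F}G$ its group algebra; scalars are identified with multiples of $1_G$. Let $\tau:\mathbb{F}G\to\mathbb{F}G$, $\sum_g\alpha_g g\mapsto\sum_g\alpha_g^q g^{-1}$. Let $e_0=\frac1n\sum_g g$. The primitive idempotents are $e_0$; $e_1,\dots,e_r$ ($\neq e_0$, fixed by $\tau$); and $e_{r+1},\tau(e_{r+1}),\dots,e_{r+s},\tau(e_{r+s})$ (not fixed by $\tau$). Put $\widehat{e}_{r+j}=e_{r+j}+\tau(e_{r+j})$, $\widehat{E}^\dagger=\{e_1,\dots,e_r,\widehat{e}_{r+1},\dots,\widehat{e}_{r+s}\}$. Let $\mu_q(n)=\min\{\dim_{\mathbb{F}}\mathbb{F}Ge: e\text{ primitive idempotent},\ e\neq e_0\}$. The Hamming weight $\mathrm{wt}_H$ of $\sum_g a_gg$ is $|\{g:a_g\ne0\}|$, and $\mathrm{wt}_H(a,b)=\mathrm{wt}_H(a)+\mathrm{wt}_H(b)$. For $a,b\in\mathbb{F}G$, $\mathcal{C}_{a,b}=\{(sa,sb):s\in\mathbb{F}G\}$;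 $\mathcal{D}_\lambda=\{\mathcal{C}_{1,\beta}:\beta\in\mathbb{F}G,\ \beta\,\tau(\beta)=\lambda-1\}$; $\mathcal{D}_{a,b}=\{\mathcal{C}\in\mathcal{D}_\lambda:(a,b)\in\mathcal{C}\}$; $\mathcal{D}_\lambda^{\le\delta}=\{\mathcal{C}\in\mathcal{D}_\lambda: \min_{0\ne c\in\mathcal{C}}\mathrm{wt}_H(c)/(2n)\le\delta\}$. For $a\in\mathbb{F}G$, $\widehat{E}_a^\dagger=\{e\in\widehat{E}^\dagger:ea\neq0\}$ and $L_a=\bigoplus_{e\in\widehat{E}_a^\dagger}\mathbb{F}Ge$. For an integer $\ell$, $\Omega_\ell$ is the set of subspaces $J=\bigoplus_{e\in S}\mathbb{F}Ge$ with $S\subseteq\widehat{E}^\dagger$ and $\dim_{\mathbb{F}}J=\ell$. For $J\in\Omega_\ell$, $\tilde J=\mathbb{F}Ge_0+J$, $\tilde J^*=\{a\in\tilde J: L_a=J\}$, and $(\tilde J^*\times\tilde J^* )^{\le\delta}=\{(a,b)\in\tilde J^*\times\tilde J^*:\mathrm{wt}_H(a,b)\le 2n\delta\}$. *)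

theory Defs
  imports Complex_Main "HOL-Computational_Algebra.Primes" "HOL-Library.Function_Algebras" "HOL-Library.Cardinality"
begin

text \<open>The finite abelian group G is a finite type 'g of class ab_group_add (written
additively: identity 0, inverse of g is -g).
The group algebra FG is the type 'g => 'a (coefficient functions).\<close>

definition gmul :: "('g::{ab_group_add,finite} \<Rightarrow> 'a::comm_ring_1) \<Rightarrow> ('g \<Rightarrow> 'a) \<Rightarrow> ('g \<Rightarrow> 'a)" where
  "gmul a b = (\<lambda>g. \<Sum>h\<in>UNIV. a h * b (g - h))"

text \<open>scalar c identified with c times 1_G\<close>
definition gscalar :: "'a::comm_ring_1 \<Rightarrow> ('g::{ab_group_add,finite} \<Rightarrow> 'a)" where
  "gscalar c = (\<lambda>g. if g = 0 then c else 0)"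

definition gscale :: "'a::field \<Rightarrow> ('g \<Rightarrow> 'a) \<Rightarrow> ('g \<Rightarrow> 'a)" where
  "gscale c a = (\<lambda>g. c * a g)"

definition gdim :: "('g \<Rightarrow> 'a::field) set \<Rightarrow> nat" where
  "gdim S = vector_space.dim gscale S"

text \<open>tau(sum a_g g) = sum a_g^q g^{-1}\<close>
definition gtau :: "nat \<Rightarrow> ('g::{ab_group_add,finite} \<Rightarrow> 'a::field) \<Rightarrow> ('g \<Rightarrow> 'a)" where
  "gtau q a = (\<lambda>g. (a (- g)) ^ q)"

definition ge0 :: "'g::{ab_group_add,finite} \<Rightarrow> 'a::field" where
  "ge0 = (\<lambda>g. inverse (of_nat CARD('g)))"

definition gidem :: "('g::{ab_group_add,finite} \<Rightarrow> 'a::comm_ring_1) \<Rightarrow> bool" where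
  "gidem e \<longleftrightarrow> gmul e e = e"

definition prim_idem :: "('g::{ab_group_add,finite} \<Rightarrow> 'a::comm_ring_1) \<Rightarrow> bool" where
  "prim_idem e \<longleftrightarrow> e \<noteq> 0 \<and> gidem e \<and>
     \<not> (\<exists>f1 f2. f1 \<noteq> 0 \<and> f2 \<noteq> 0 \<and> gidem f1 \<and> gidem f2 \<and> gmul f1 f2 = 0 \<and> e = f1 + f2)"

definition gideal :: "('g::{ab_group_add,finite} \<Rightarrow> 'a::comm_ring_1) \<Rightarrow> ('g \<Rightarrow> 'a) set" where
  "gideal e = {gmul s e | s. True}"

definition idsum :: "('g::{ab_group_add,finite} \<Rightarrow> 'a::comm_ring_1) set \<Rightarrow> ('g \<Rightarrow> 'a) set" where
  "idsum S = {\<Sum>e\<in>S. gmul (s e) e | s. True}"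

definition Ehat :: "nat \<Rightarrow> ('g::{ab_group_add,finite} \<Rightarrow> 'a::field) set" where
  "Ehat q = {e. prim_idem e \<and> e \<noteq> ge0 \<and> gtau q e = e}
          \<union> {e + gtau q e | e. prim_idem e \<and> gtau q e \<noteq> e}"

definition mu :: "'g::{ab_group_add,finite} itself \<Rightarrow> 'a::field itself \<Rightarrow> nat" where
  "mu _ _ = Min {gdim (gideal e) | e :: 'g \<Rightarrow> 'a. prim_idem e \<and> e \<noteq> ge0}"

definition Lset :: "nat \<Rightarrow> ('g::{ab_group_add,finite} \<Rightarrow> 'a::field) \<Rightarrow> ('g \<Rightarrow> 'a) set" where
  "Lset q a = idsum {e \<in> Ehat q. gmul e a \<noteq> 0}"

definition Omega :: "nat \<Rightarrow> nat \<Rightarrow> ('g::{ab_group_add,finite} \<Rightarrow> 'a::field) set set" where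
  "Omega q l = {idsum S | S. S \<subseteq> Ehat q \<and> gdim (idsum S) = l}"

definition Jtilde :: "('g::{ab_group_add,finite} \<Rightarrow> 'a::field) set \<Rightarrow> ('g \<Rightarrow> 'a) set" where
  "Jtilde J = {x + y | x y. x \<in> gideal ge0 \<and> y \<in> J}"

definition Jstar :: "nat \<Rightarrow> ('g::{ab_group_add,finite} \<Rightarrow> 'a::field) set \<Rightarrow> ('g \<Rightarrow> 'a) set" where
  "Jstar q J = {a \<in> Jtilde J. Lset q a = J}"

definition wt :: "('g::finite \<Rightarrow> 'a::zero) \<Rightarrow> nat" where
  "wt a = card {g. a g \<noteq> 0}"

definition wt2 :: "('g::finite \<Rightarrow> 'a::zero) \<times> ('g \<Rightarrow> 'a) \<Rightarrow> nat" where
  "wt2 c = wt (fst c) + wt (snd c)"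

definition code :: "('g::{ab_group_add,finite} \<Rightarrow> 'a::comm_ring_1) \<Rightarrow> ('g \<Rightarrow> 'a) \<Rightarrow> (('g \<Rightarrow> 'a) \<times> ('g \<Rightarrow> 'a)) set" where
  "code a b = {(gmul s a, gmul s b) | s. True}"

definition Dl :: "nat \<Rightarrow> 'a::field \<Rightarrow> (('g::{ab_group_add,finite} \<Rightarrow> 'a) \<times> ('g \<Rightarrow> 'a)) set set" where
  "Dl q lam = {code (gscalar 1) \<beta> | \<beta>. gmul \<beta> (gtau q \<beta>) = gscalar (lam - 1)}"

definition Dab :: "nat \<Rightarrow> 'a::field \<Rightarrow> ('g::{ab_group_add,finite} \<Rightarrow> 'a) \<Rightarrow> ('g \<Rightarrow> 'a) \<Rightarrow> (('g \<Rightarrow> 'a) \<times> ('g \<Rightarrow> 'a)) set set" where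
  "Dab q lam a b = {C \<in> Dl q lam. (a, b) \<in> C}"

definition reldist :: "(('g::{ab_group_add,finite} \<Rightarrow> 'a::zero) \<times> ('g \<Rightarrow> 'a)) set \<Rightarrow> real" where
  "reldist C = Min {real (wt2 c) / (2 * real CARD('g)) | c. c \<in> C \<and> c \<noteq> (0, 0)}"

definition Dle :: "nat \<Rightarrow> 'a::field \<Rightarrow> real \<Rightarrow> (('g::{ab_group_add,finite} \<Rightarrow> 'a) \<times> ('g \<Rightarrow> 'a)) set set" where
  "Dle q lam \<delta> = {C \<in> Dl q lam. reldist C \<le> \<delta>}"

definition pairs_le :: "nat \<Rightarrow> ('g::{ab_group_add,finite} \<Rightarrow> 'a::field) set \<Rightarrow> real \<Rightarrow> (('g \<Rightarrow> 'a) \<times> ('g \<Rightarrow> 'a)) set" where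
  "pairs_le q J \<delta> = {(a, b). a \<in> Jstar q J \<and> b \<in> Jstar q J \<and>
       real (wt2 (a, b)) \<le> 2 * real CARD('g) * \<delta>}"

end

theory Submission
  imports Defs "HOL-Number_Theory.Residues"
begin

locale crm =
  fixes m :: "'b::ab_group_add \<Rightarrow> 'b \<Rightarrow> 'b" and u :: 'b
  assumes m_assoc: "m (m a b) c = m a (m b c)"
    and m_comm: "m a b = m b a"
    and m_unit: "m u a = a"
    and m_add: "m a (b + c) = m a b + m a c"
begin

lemma m_lc: "m a (m b c) = m b (m a c)" by (metis m_assoc m_comm)
lemma m_add_left: "m (a + b) c = m a c + m b c" using m_add m_comm by metis
lemma m_zero[simp]: "m a 0 = 0"
proof -
  have "m a 0 = m a (0 + 0)" by simp
  also have "\<dots> = m a 0 + m a 0" by (rule m_add)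
  finally show ?thesis by simp
qed
lemma m_zero_left[simp]: "m 0 a = 0" by (metis m_comm m_zero)
lemma m_diff: "m a (b - c) = m a b - m a c"
proof -
  have "m a b = m a ((b - c) + c)" by simp
  also have "\<dots> = m a (b - c) + m a c" by (rule m_add)
  finally show ?thesis by simp
qed
lemma m_diff_left: "m (b - c) a = m b a - m c a" by (metis m_comm m_diff)
lemma m_unit_right: "m a u = a" by (metis m_comm m_unit)
lemma m_sum: "m a (sum f S) = sum (\<lambda>x. m a (f x)) S"
  by (induction S rule: infinite_finite_induct) (simp_all add: m_add)

definition prim where
  "prim e \<longleftrightarrow> e \<noteq> 0 \<and> m e e = e \<and> \<not> (\<exists>f1 f2. f1 \<noteq> 0 \<and> f2 \<noteq> 0 \<and> m f1 f1 = f1 \<and> m f2 f2 = f2 \<and> m f1 f2 = 0 \<and> e = f1 + f2)"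

lemma split_lemma:
  assumes pe: "prim e" and ee: "m e e = e" and xx: "m x x = x" and ex: "m e x = x"
  shows "x = 0 \<or> e - x = 0"
proof (rule ccontr)
  assume "\<not> (x = 0 \<or> e - x = 0)"
  hence nz: "x \<noteq> 0" "e - x \<noteq> 0" by auto
  have xe: "m x e = x" using ex m_comm by metis
  have "m (e - x) (e - x) = e - x"
    by (simp add: m_diff m_diff_left ee xx ex xe)
  moreover have "m x (e - x) = 0" by (simp add: m_diff xe xx)
  moreover have "e = x + (e - x)" by simp
  ultimately show False using pe nz xx unfolding prim_def by blast
qed

lemma prim_orth:
  assumes pe: "prim e" and pf: "prim f" and ne: "e \<noteq> f"
  shows "m e f = 0"
proof -
  have ee: "m e e = e" and ff: "m f f = f" using pe pf by (auto simp: prim_def)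
  define x where "x = m e f"
  have ex: "m e x = x" unfolding x_def using m_assoc[of e e f, symmetric] by (simp add: ee)
  have fx: "m f x = x" unfolding x_def using m_lc[of f e f] by (simp add: ff)
  have xx: "m x x = x" using m_assoc[of e f x] fx ex unfolding x_def by simp
  have 1: "x = 0 \<or> e - x = 0" by (rule split_lemma[OF pe ee xx ex])
  have 2: "x = 0 \<or> f - x = 0" by (rule split_lemma[OF pf ff xx fx])
  from 1 2 ne show ?thesis unfolding x_def by auto
qed

lemma prim_decomp:
  assumes fin: "finite (UNIV :: 'b set)" and u0: "u \<noteq> 0"
  shows "(\<Sum>e\<in>{e. prim e}. e) = u"
proof -
  define Q where "Q A \<longleftrightarrow> (\<forall>e\<in>A. e \<noteq> 0 \<and> m e e = e) \<and> (\<forall>e\<in>A. \<forall>g\<in>A. e \<noteq> g \<longrightarrow> m e g = 0)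
      \<and> sum (\<lambda>e. e) A = u" for A
  have finS: "finite (S :: 'b set)" for S using fin by (rule finite_subset[OF subset_UNIV])
  have Qu: "Q {u}" using u0 m_unit by (simp add: Q_def)
  have finQ: "finite {A :: 'b set. Q A}"
    by (rule finite_subset[OF subset_UNIV]) (simp add: fin Finite_Set.finite_set)
  define k where "k = Max (card ` {A. Q A})"
  have "k \<in> card ` {A. Q A}" unfolding k_def using finQ Qu by (intro Max_in) auto
  then obtain A where QA: "Q A" and cardA: "card A = k" by auto
  have maxA: "card B \<le> card A" if "Q B" for B
    unfolding cardA k_def using finQ that by (intro Max_ge) auto
  have primA: "prim e" if eA: "e \<in> A" for e
  proof (rule ccontr)
    assume np: "\<not> prim e"
    have e0: "e \<noteq> 0" and ee: "m e e = e" using QA eA by (auto simp: Q_def)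
    then obtain f1 f2 where f: "f1 \<noteq> 0" "f2 \<noteq> 0" "m f1 f1 = f1" "m f2 f2 = f2" "m f1 f2 = 0" "e = f1 + f2"
      using np unfolding prim_def by blast
    have f1e: "m f1 e = f1" using f by (simp add: m_add)
    have f2e: "m f2 e = f2" using f m_comm[of f2 f1] by (simp add: m_add)
    have o1: "m f1 g = 0" if "g \<in> A - {e}" for g
    proof -
      have "m e g = 0" using QA eA that by (auto simp: Q_def)
      then show ?thesis using m_assoc[of f1 e g] f1e by simp
    qed
    have o2: "m f2 g = 0" if "g \<in> A - {e}" for g
    proof -
      have "m e g = 0" using QA eA that by (auto simp: Q_def)
      then show ?thesis using m_assoc[of f2 e g] f2e by simp
    qed
    have n1: "f1 \<notin> A - {e}" using o1 f by force
    have n2: "f2 \<notin> A - {e}" using o2 f by force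
    have n12: "f1 \<noteq> f2" using f by force
    define B where "B = insert f1 (insert f2 (A - {e}))"
    have "card B = Suc (Suc (card (A - {e})))"
      unfolding B_def using n1 n2 n12 finS by simp
    also have "card (A - {e}) = card A - 1" using eA finS by simp
    moreover have cA: "card A > 0" using eA finS[of A] card_gt_0_iff by blast
    ultimately have cB: "card B = card A + 1" by simp
    have "Q B"
      unfolding Q_def
    proof (intro conjI)
      show "\<forall>e\<in>B. e \<noteq> 0 \<and> m e e = e" using QA f unfolding B_def Q_def by auto
      show "\<forall>x\<in>B. \<forall>g\<in>B. x \<noteq> g \<longrightarrow> m x g = 0"
      proof (intro ballI impI)
        fix x g assume xB: "x \<in> B" and gB: "g \<in> B" and xg: "x \<noteq> g"
        have o1': "m g f1 = 0" if "g \<in> A - {e}" for g using o1[OF that] m_comm[of g f1] by simp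
        have o2': "m g f2 = 0" if "g \<in> A - {e}" for g using o2[OF that] m_comm[of g f2] by simp
        have f21: "m f2 f1 = 0" using f m_comm[of f2 f1] by simp
        show "m x g = 0"
          using xB gB xg QA f o1 o2 o1' o2' f21 unfolding B_def Q_def by auto
      qed
      have "sum (\<lambda>e. e) B = f1 + (f2 + sum (\<lambda>e. e) (A - {e}))"
        unfolding B_def using n1 n2 n12 finS by simp
      also have "\<dots> = e + sum (\<lambda>e. e) (A - {e})" using f by (simp add: add.assoc)
      also have "\<dots> = sum (\<lambda>e. e) A" using eA finS by (simp add: sum.remove)
      finally show "sum (\<lambda>e. e) B = u" using QA by (simp add: Q_def)
    qed
    with maxA cB show False by fastforce
  qed
  have "{e. prim e} = A"
  proof
    show "A \<subseteq> {e. prim e}" using primA by auto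
    show "{e. prim e} \<subseteq> A"
    proof
      fix f assume "f \<in> {e. prim e}"
      hence pf: "prim f" by simp
      show "f \<in> A"
      proof (rule ccontr)
        assume fA: "f \<notin> A"
        have "f = m f u" by (simp add: m_unit_right)
        also have "\<dots> = sum (\<lambda>e. m f e) A" using QA m_sum[of f "\<lambda>e. e" A] by (simp add: Q_def)
        also have "\<dots> = 0" using fA primA pf by (intro sum.neutral) (auto intro: prim_orth)
        finally show False using pf by (simp add: prim_def)
      qed
    qed
  qed
  then show ?thesis using QA by (simp add: Q_def)
qed

end

lemma sum_neg_reindex: "(\<Sum>h\<in>UNIV. f (- h)) = (\<Sum>h\<in>(UNIV::'g::{ab_group_add,finite} set). f h)"
  by (rule sum.reindex_bij_witness[of _ uminus uminus]) auto
lemma sum_shift: "(\<Sum>h\<in>UNIV. f (h + c)) = (\<Sum>h\<in>(UNIV::'g::{ab_group_add,finite} set). f h)"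
  by (rule sum.reindex_bij_witness[of _ "\<lambda>h. h - c" "\<lambda>h. h + c"]) auto
lemma sum_refl: "(\<Sum>h\<in>UNIV. f (c - h)) = (\<Sum>h\<in>(UNIV::'g::{ab_group_add,finite} set). f h)"
  by (rule sum.reindex_bij_witness[of _ "\<lambda>h. c - h" "\<lambda>h. c - h"]) auto

lemma gmul_comm: "gmul a b = gmul b (a :: 'g::{ab_group_add,finite} \<Rightarrow> 'a::comm_ring_1)"
proof
  fix g
  have "gmul b a g = (\<Sum>h\<in>UNIV. b (g - h) * a (g - (g - h)))"
    unfolding gmul_def by (rule sum_refl[symmetric])
  also have "\<dots> = gmul a b g" unfolding gmul_def by (simp add: mult.commute)
  finally show "gmul a b g = gmul b a g" by simp
qed

lemma gmul_assoc: "gmul (gmul a b) c = gmul a (gmul b (c :: 'g::{ab_group_add,finite} \<Rightarrow> 'a::comm_ring_1))"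
proof
  fix g
  have "gmul (gmul a b) c g = (\<Sum>k\<in>UNIV. \<Sum>h\<in>UNIV. a h * b (k - h) * c (g - k))"
    unfolding gmul_def by (simp add: sum_distrib_right)
  also have "\<dots> = (\<Sum>h\<in>UNIV. \<Sum>k\<in>UNIV. a h * b (k - h) * c (g - k))"
    by (rule sum.swap)
  also have "\<dots> = (\<Sum>h\<in>UNIV. a h * (\<Sum>k\<in>UNIV. b (k - h) * c (g - k)))"
    by (simp add: sum_distrib_left mult.assoc)
  also have "\<dots> = (\<Sum>h\<in>UNIV. a h * (\<Sum>j\<in>UNIV. b j * c (g - h - j)))"
  proof (rule sum.cong[OF refl])
    fix h
    have "(\<Sum>k\<in>UNIV. b (k - h) * c (g - k)) = (\<Sum>j\<in>UNIV. b (j + h - h) * c (g - (j + h)))"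
      by (rule sum_shift[symmetric])
    also have "\<dots> = (\<Sum>j\<in>UNIV. b j * c (g - h - j))"
      by (simp add: algebra_simps)
    finally show "a h * (\<Sum>k\<in>UNIV. b (k - h) * c (g - k)) = a h * (\<Sum>j\<in>UNIV. b j * c (g - h - j))"
      by simp
  qed
  also have "\<dots> = gmul a (gmul b c) g" unfolding gmul_def by simp
  finally show "gmul (gmul a b) c g = gmul a (gmul b c) g" .
qed

lemma gmul_add: "gmul a (b + c) = gmul a b + gmul a (c :: 'g::{ab_group_add,finite} \<Rightarrow> 'a::comm_ring_1)"
  unfolding gmul_def by (rule ext) (simp add: sum.distrib distrib_left)

lemma gmul_unit: "gmul (gscalar 1) a = (a :: 'g::{ab_group_add,finite} \<Rightarrow> 'a::comm_ring_1)"
proof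
  fix g
  have "\<And>h. gscalar 1 h * a (g - h) = (if h = 0 then a g else 0)" by (simp add: gscalar_def)
  then show "gmul (gscalar 1) a g = a g" unfolding gmul_def by simp
qed

interpretation G: crm "gmul :: ('g::{ab_group_add,finite} \<Rightarrow> 'a::comm_ring_1) \<Rightarrow> _" "gscalar 1"
  by unfold_locales (rule gmul_assoc, rule gmul_comm, rule gmul_unit, rule gmul_add)

lemma prim_idem_G: "prim_idem e = G.prim e"
  unfolding prim_idem_def G.prim_def gidem_def by simp

lemma gscalar1_nz: "gscalar 1 \<noteq> (0 :: 'g::{ab_group_add,finite} \<Rightarrow> 'a::comm_ring_1)"
proof
  assume "gscalar 1 = (0 :: 'g \<Rightarrow> 'a)"
  hence "gscalar 1 (0::'g) = (0 :: 'a)" by simp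
  thus False by (simp add: gscalar_def)
qed

lemma prim_sum_all: "(\<Sum>e\<in>{e. prim_idem e}. e) = (gscalar 1 :: 'g::{ab_group_add,finite} \<Rightarrow> 'a::{comm_ring_1,finite})"
  unfolding prim_idem_G by (rule G.prim_decomp) (simp_all add: gscalar1_nz)

lemma gmul_scalar_right: "gmul (x :: 'g::{ab_group_add,finite} \<Rightarrow> 'a) (gscalar c) = (\<lambda>g. x g * (c :: 'a::comm_ring_1))"
proof
  fix g :: 'g
  have "\<And>h::'g. x h * gscalar c (g - h) = (if h = g then x g * c else 0)" by (simp add: gscalar_def)
  then show "gmul x (gscalar c) g = x g * c" unfolding gmul_def by simp
qed

lemma gmul_ge0: "gmul (x :: 'g \<Rightarrow> 'a) ge0 = (\<lambda>g. sum x UNIV * inverse (of_nat CARD('g::{ab_group_add,finite})) :: 'a::field)"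
  unfolding gmul_def ge0_def by (rule ext) (simp add: sum_distrib_right)

lemma gmul_const: "gmul (\<lambda>_. c) (\<lambda>_. c) = (\<lambda>_::'g::{ab_group_add,finite}. of_nat CARD('g) * c * (c::'a::comm_ring_1))"
  unfolding gmul_def by (simp add: mult.assoc)

lemma wt_const: "c \<noteq> 0 \<Longrightarrow> wt (\<lambda>_::'g::finite. c) = CARD('g)"
  unfolding wt_def by simp

context
  fixes q :: nat
  assumes q0: "q > 0"
  and frob: "\<And>x y :: 'a::{field,finite}. (x + y)^q = x^q + y^q"
  and invol: "\<And>x :: 'a. (x^q)^q = x"
  and n0: "of_nat CARD('g::{ab_group_add,finite}) \<noteq> (0::'a)"
begin

lemma frob_sum: "(sum f A)^q = sum (\<lambda>i. (f i)^q) (A :: 'b set)" for f :: "'b \<Rightarrow> 'a"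
  by (induction A rule: infinite_finite_induct) (simp_all add: frob q0)

lemma gtau_add: "gtau q (a + b) = gtau q a + gtau q (b :: 'g \<Rightarrow> 'a)"
  unfolding gtau_def by (rule ext) (simp add: frob)

lemma gtau_zero: "gtau q (0 :: 'g \<Rightarrow> 'a) = 0"
  unfolding gtau_def using q0 by (simp add: fun_eq_iff)

lemma gtau_gtau: "gtau q (gtau q a) = (a :: 'g \<Rightarrow> 'a)"
  unfolding gtau_def by (simp add: invol)

lemma gtau_gmul: "gtau q (gmul a b) = gmul (gtau q a) (gtau q (b :: 'g \<Rightarrow> 'a))"
proof
  fix g :: 'g
  have "gtau q (gmul a b) g = (\<Sum>h\<in>UNIV. (a h)^q * (b (- g - h))^q)"
    unfolding gtau_def gmul_def by (simp add: frob_sum power_mult_distrib)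
  also have "\<dots> = (\<Sum>h\<in>UNIV. (a (- h))^q * (b (- g - (- h)))^q)"
    by (rule sum_neg_reindex[symmetric])
  also have "\<dots> = gmul (gtau q a) (gtau q b) g"
    unfolding gtau_def gmul_def by (simp add: algebra_simps)
  finally show "gtau q (gmul a b) g = gmul (gtau q a) (gtau q b) g" .
qed

lemma gtau_prim: "prim_idem e \<Longrightarrow> prim_idem (gtau q (e :: 'g \<Rightarrow> 'a))"
proof -
  assume pe: "prim_idem e"
  have e0: "e \<noteq> 0" and ee: "gmul e e = e"
    and ns: "\<not> (\<exists>f1 f2. f1 \<noteq> 0 \<and> f2 \<noteq> 0 \<and> gidem f1 \<and> gidem f2 \<and> gmul f1 f2 = 0 \<and> e = f1 + f2)"
    using pe unfolding prim_idem_def gidem_def by auto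
  have inj0: "gtau q x = 0 \<Longrightarrow> x = 0" for x :: "'g \<Rightarrow> 'a"
    by (metis gtau_gtau gtau_zero)
  show ?thesis
    unfolding prim_idem_def gidem_def
  proof (intro conjI notI)
    assume "gtau q e = 0" with inj0 e0 show False by blast
  next
    show "gmul (gtau q e) (gtau q e) = gtau q e" by (simp add: ee flip: gtau_gmul)
  next
    assume "\<exists>f1 f2. f1 \<noteq> 0 \<and> f2 \<noteq> 0 \<and> gmul f1 f1 = f1 \<and> gmul f2 f2 = f2 \<and> gmul f1 f2 = 0 \<and> gtau q e = f1 + f2"
    then obtain f1 f2 where f: "f1 \<noteq> 0" "f2 \<noteq> 0" "gmul f1 f1 = f1" "gmul f2 f2 = f2" "gmul f1 f2 = 0" "gtau q e = f1 + f2"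
      by blast
    have "e = gtau q f1 + gtau q f2" using f(6) by (metis gtau_add gtau_gtau)
    moreover have "gtau q f1 \<noteq> 0" "gtau q f2 \<noteq> 0" using f inj0 gtau_gtau gtau_zero by metis+
    moreover have "gidem (gtau q f1)" "gidem (gtau q f2)" unfolding gidem_def
      by (simp_all add: f flip: gtau_gmul)
    moreover have "gmul (gtau q f1) (gtau q f2) = 0" by (simp add: f gtau_zero flip: gtau_gmul)
    ultimately show False using ns by blast
  qed
qed

lemma ge0_const: "(ge0 :: 'g \<Rightarrow> 'a) = (\<lambda>_. inverse (of_nat CARD('g)))"
  unfolding ge0_def by simp

lemma ge0_nz: "(ge0 :: 'g \<Rightarrow> 'a) \<noteq> 0"
proof
  assume "(ge0 :: 'g \<Rightarrow> 'a) = 0"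
  hence "ge0 (0::'g) = (0::'a)" by simp
  with n0 show False by (simp add: ge0_def)
qed

lemma const_idem:
  assumes c0: "c \<noteq> 0" and id: "gmul (\<lambda>_::'g. c) (\<lambda>_. c) = (\<lambda>_. c :: 'a)"
  shows "(\<lambda>_. c) = (ge0 :: 'g \<Rightarrow> 'a)"
proof -
  have h: "(\<lambda>_::'g. of_nat CARD('g) * c * c :: 'a) = (\<lambda>_. c)" using id by (simp only: gmul_const)
  have "of_nat CARD('g) * c = 1" using h c0 by (simp add: fun_eq_iff)
  hence "c = inverse (of_nat CARD('g))" using n0 by (simp add: field_simps)
  thus ?thesis by (simp add: ge0_const)
qed

lemma ge0_idem: "gmul ge0 ge0 = (ge0 :: 'g \<Rightarrow> 'a)"
  unfolding gmul_ge0 using n0 by (simp add: ge0_const)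

lemma ge0_prim: "prim_idem (ge0 :: 'g \<Rightarrow> 'a)"
  unfolding prim_idem_def gidem_def
proof (intro conjI notI)
  assume "(ge0 :: 'g \<Rightarrow> 'a) = 0" with ge0_nz show False by simp
next
  show "gmul ge0 ge0 = (ge0 :: 'g \<Rightarrow> 'a)" by (rule ge0_idem)
next
  assume "\<exists>f1 f2. f1 \<noteq> 0 \<and> f2 \<noteq> 0 \<and> gmul f1 f1 = f1 \<and> gmul f2 f2 = f2 \<and> gmul f1 f2 = 0 \<and> (ge0 :: 'g \<Rightarrow> 'a) = f1 + f2"
  then obtain f1 f2 :: "'g \<Rightarrow> 'a" where f: "f1 \<noteq> 0" "f2 \<noteq> 0" "gmul f1 f1 = f1" "gmul f2 f2 = f2" "gmul f1 f2 = 0" "ge0 = f1 + f2"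
    by blast
  have "gmul f1 ge0 = gmul f1 (f1 + f2)" by (simp only: f(6))
  also have "\<dots> = f1" using f(3) f(5) by (simp add: gmul_add)
  finally have "gmul f1 ge0 = f1" .
  hence f1c: "f1 = (\<lambda>_. sum f1 UNIV * inverse (of_nat CARD('g)))" by (simp add: gmul_ge0)
  define c where "c = sum f1 UNIV * inverse (of_nat CARD('g) :: 'a)"
  have c0: "c \<noteq> 0" using f(1) f1c unfolding c_def by auto
  have "(\<lambda>_. c) = (ge0 :: 'g \<Rightarrow> 'a)"
    using c0 f(3) f1c unfolding c_def by (intro const_idem) auto
  hence "f1 = ge0" using f1c unfolding c_def by simp
  with f show False by simp
qed

lemma gtau_ge0: "gtau q ge0 = (ge0 :: 'g \<Rightarrow> 'a)"
proof -
  have 1: "gtau q ge0 = (\<lambda>_::'g. (inverse (of_nat CARD('g)))^q :: 'a)"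
    unfolding gtau_def ge0_def by simp
  have "gmul (gtau q ge0) (gtau q ge0) = gtau q (ge0 :: 'g \<Rightarrow> 'a)"
    by (simp add: ge0_idem flip: gtau_gmul)
  then show ?thesis unfolding 1 using n0 by (intro const_idem) auto
qed

end

context
  fixes q :: nat
  assumes q0: "q > 0"
  and frob: "\<And>x y :: 'a::{field,finite}. (x + y)^q = x^q + y^q"
  and invol: "\<And>x :: 'a. (x^q)^q = x"
  and n0: "of_nat CARD('g::{ab_group_add,finite}) \<noteq> (0::'a)"
begin

lemmas gtau_prim' = gtau_prim[OF q0 frob invol n0]
lemmas gtau_gtau' = gtau_gtau[OF q0 frob invol n0]
lemmas gtau_ge0' = gtau_ge0[OF q0 frob invol n0]
lemmas ge0_prim' = ge0_prim[OF q0 frob invol n0]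

lemma orth: "prim_idem e \<Longrightarrow> prim_idem f \<Longrightarrow> e \<noteq> f \<Longrightarrow> gmul e f = (0 :: 'g \<Rightarrow> 'a)"
  unfolding prim_idem_G by (rule G.prim_orth)

lemma EH0: "eh \<in> Ehat q \<Longrightarrow> gmul eh ge0 = (0 :: 'g \<Rightarrow> 'a)"
proof -
  assume "eh \<in> Ehat q"
  then consider (a) "prim_idem eh" "eh \<noteq> ge0" | (b) e where "eh = e + gtau q e" "prim_idem e" "gtau q e \<noteq> e"
    unfolding Ehat_def by blast
  then show ?thesis
  proof cases
    case a then show ?thesis using orth ge0_prim' by blast
  next
    case b
    have e1: "e \<noteq> ge0" using b gtau_ge0' by auto
    have e2: "gtau q e \<noteq> ge0" using b gtau_ge0' gtau_gtau' by metis
    have "gmul eh ge0 = gmul e ge0 + gmul (gtau q e) ge0" unfolding b by (rule G.m_add_left)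
    also have "\<dots> = 0" using orth[OF b(2) ge0_prim' e1] orth[OF gtau_prim'[OF b(2)] ge0_prim' e2] by simp
    finally show ?thesis .
  qed
qed

lemma Ehat_sub: "eh \<in> Ehat q \<Longrightarrow> \<exists>e. prim_idem e \<and> e \<noteq> ge0 \<and> gmul e eh = (e :: 'g \<Rightarrow> 'a)"
proof -
  assume "eh \<in> Ehat q"
  then consider (a) "prim_idem eh" "eh \<noteq> ge0" | (b) e where "eh = e + gtau q e" "prim_idem e" "gtau q e \<noteq> e"
    unfolding Ehat_def by blast
  then show ?thesis
  proof cases
    case a then show ?thesis unfolding prim_idem_def gidem_def by blast
  next
    case b
    have e1: "e \<noteq> ge0" using b gtau_ge0' by auto
    have "gmul e eh = gmul e e + gmul e (gtau q e)" unfolding b by (rule G.m_add)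
    also have "\<dots> = e" using orth[OF b(2) gtau_prim'[OF b(2)]] b(2,3)
      unfolding prim_idem_def gidem_def by auto
    finally show ?thesis using b e1 by blast
  qed
qed

lemma KEY: "ge0 + (\<Sum>e\<in>Ehat q. e) = (gscalar 1 :: 'g \<Rightarrow> 'a)"
proof -
  define P1 where "P1 = {e :: 'g \<Rightarrow> 'a. prim_idem e \<and> e \<noteq> ge0 \<and> gtau q e = e}"
  define P2 where "P2 = {e :: 'g \<Rightarrow> 'a. prim_idem e \<and> gtau q e \<noteq> e}"
  define H where "H = (\<lambda>e. e + gtau q e) ` P2"
  have EH: "Ehat q = P1 \<union> H" unfolding Ehat_def P1_def P2_def H_def by auto
  have P: "{e. prim_idem e} = insert ge0 (P1 \<union> P2)"
    unfolding P1_def P2_def using ge0_prim' gtau_ge0' by auto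
  have g1: "ge0 \<notin> P1 \<union> P2" unfolding P1_def P2_def using gtau_ge0' by auto
  have d12: "P1 \<inter> P2 = {}" unfolding P1_def P2_def by auto
  have dH: "P1 \<inter> H = {}"
  proof (rule ccontr)
    assume "P1 \<inter> H \<noteq> {}"
    then obtain f where f: "f \<in> P2" "f + gtau q f \<in> P1" unfolding H_def by auto
    have pf: "prim_idem f" and ptf: "prim_idem (gtau q f)" and ne: "gtau q f \<noteq> f"
      using f(1) gtau_prim' unfolding P2_def by auto
    have "prim_idem (f + gtau q f)" using f(2) unfolding P1_def by auto
    moreover have "gmul f (gtau q f) = 0" using orth[OF pf ptf] ne by metis
    ultimately show False using pf ptf unfolding prim_idem_def gidem_def by blast
  qed
  have sP2: "(\<Sum>e\<in>P2. e) = (\<Sum>e\<in>H. e)"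
  proof -
    have "(\<Sum>e\<in>P2. e) = (\<Sum>y\<in>H. \<Sum>x\<in>{x. x \<in> P2 \<and> x + gtau q x = y}. x)"
      unfolding H_def by (rule sum.image_gen) simp
    also have "\<dots> = (\<Sum>y\<in>H. y)"
    proof (rule sum.cong[OF refl])
      fix y assume "y \<in> H"
      then obtain f where f: "f \<in> P2" and y: "y = f + gtau q f" unfolding H_def by auto
      have pf: "prim_idem f" and ptf: "prim_idem (gtau q f)" and ne: "gtau q f \<noteq> f"
        using f gtau_prim' unfolding P2_def by auto
      have "{x. x \<in> P2 \<and> x + gtau q x = y} = {f, gtau q f}"
      proof
        show "{f, gtau q f} \<subseteq> {x. x \<in> P2 \<and> x + gtau q x = y}"
          using f y ptf ne unfolding P2_def by (auto simp: gtau_gtau' add.commute)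
        show "{x. x \<in> P2 \<and> x + gtau q x = y} \<subseteq> {f, gtau q f}"
        proof
          fix x assume "x \<in> {x. x \<in> P2 \<and> x + gtau q x = y}"
          hence x: "x \<in> P2" "x + gtau q x = y" by auto
          have px: "prim_idem x" and ptx: "prim_idem (gtau q x)" and nex: "gtau q x \<noteq> x"
            using x gtau_prim' unfolding P2_def by auto
          have xx: "gmul x x = x" using px unfolding prim_idem_def gidem_def by auto
          have "gmul x y = gmul x x + gmul x (gtau q x)" unfolding x(2)[symmetric] by (rule G.m_add)
          also have "\<dots> = x" using xx orth[OF px ptx] nex by auto
          finally have 1: "gmul x y = x" .
          show "x \<in> {f, gtau q f}"
          proof (rule ccontr)
            assume "x \<notin> {f, gtau q f}"
            hence "gmul x f = 0" "gmul x (gtau q f) = 0" using orth[OF px pf] orth[OF px ptf] by auto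
            hence "gmul x y = 0" unfolding y by (simp add: G.m_add)
            with 1 px show False unfolding prim_idem_def by simp
          qed
        qed
      qed
      then show "(\<Sum>x\<in>{x. x \<in> P2 \<and> x + gtau q x = y}. x) = y"
        using ne y by simp
    qed
    finally show ?thesis .
  qed
  have "gscalar 1 = (\<Sum>e\<in>{e. prim_idem e}. e :: 'g \<Rightarrow> 'a)" by (rule prim_sum_all[symmetric])
  also have "\<dots> = ge0 + ((\<Sum>e\<in>P1. e) + (\<Sum>e\<in>P2. e))"
    unfolding P using g1 d12 by (simp add: sum.union_disjoint)
  also have "\<dots> = ge0 + (\<Sum>e\<in>Ehat q. e)"
    unfolding EH sP2 using dH by (simp add: sum.union_disjoint)
  finally show ?thesis by simp
qed

end

lemma sum_fun_apply: "(sum f A) x = sum (\<lambda>a. f a x) A"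
  by (induction A rule: infinite_finite_induct) auto

interpretation GV: vector_space "gscale :: 'a::field \<Rightarrow> ('g \<Rightarrow> 'a) \<Rightarrow> _"
  by unfold_locales (simp_all add: gscale_def fun_eq_iff algebra_simps)

lemma gdim_GV: "gdim S = GV.dim S"
  unfolding gdim_def ..

lemma field_power_card: "(x :: 'a::{field,finite}) ^ CARD('a) = x"
proof (cases "x = 0")
  case False
  have "x * (\<Prod>y\<in>UNIV-{0}. x * y) = x * x ^ (card (UNIV :: 'a set) - 1) * \<Prod>(UNIV-{0})"
    by (simp add: prod.distrib mult_ac)
  also have "x * x ^ (card (UNIV :: 'a set) - 1) = x ^ Suc (card (UNIV :: 'a set) - 1)"
    by (subst power_Suc) auto
  also have "Suc (card (UNIV :: 'a set) - 1) = card (UNIV :: 'a set)"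
    using finite_UNIV_card_ge_0[where ?'a = 'a] by simp
  also have "(\<Prod>y\<in>UNIV-{0}. x * y) = (\<Prod>y\<in>UNIV-{0}. y)"
    by (rule prod.reindex_bij_witness[of _ "\<lambda>y. y / x" "\<lambda>y. x * y"]) (use False in auto)
  finally show ?thesis
    by simp
qed (use finite_UNIV_card_ge_0[where ?'a = 'a] in auto)

context
  fixes q :: nat
  assumes q0: "q > 0"
  and frob: "\<And>x y :: 'a::{field,finite}. (x + y)^q = x^q + y^q"
  and invol: "\<And>x :: 'a. (x^q)^q = x"
  and n0: "of_nat CARD('g::{ab_group_add,finite}) \<noteq> (0::'a)"
begin

lemmas EH0' = EH0[OF q0 frob invol n0]
lemmas Ehat_sub' = Ehat_sub[OF q0 frob invol n0]
lemmas KEY' = KEY[OF q0 frob invol n0]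

lemma decomp: "x = gmul x ge0 + (\<Sum>e\<in>Ehat q. gmul x e)" for x :: "'g \<Rightarrow> 'a"
proof -
  have "x = gmul x (gscalar 1)" by (simp add: G.m_unit_right)
  also have "\<dots> = gmul x (ge0 + (\<Sum>e\<in>Ehat q. e))" by (simp add: KEY')
  also have "\<dots> = gmul x ge0 + (\<Sum>e\<in>Ehat q. gmul x e)" by (simp add: G.m_add G.m_sum)
  finally show ?thesis .
qed

lemma inJt: "x \<in> Jtilde (Lset q x)" for x :: "'g \<Rightarrow> 'a"
proof -
  define T where "T = {e \<in> Ehat q. gmul e x \<noteq> 0}"
  have "(\<Sum>e\<in>Ehat q. gmul x e) = (\<Sum>e\<in>T. gmul x e)"
    by (rule sum.mono_neutral_right) (auto simp: T_def gmul_comm)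
  hence "x = gmul x ge0 + (\<Sum>e\<in>T. gmul x e)" using decomp[of x] by simp
  moreover have "gmul x ge0 \<in> gideal ge0" unfolding gideal_def by auto
  moreover have "(\<Sum>e\<in>T. gmul x e) \<in> Lset q x"
    unfolding Lset_def idsum_def T_def by auto
  ultimately show ?thesis unfolding Jtilde_def by blast
qed

lemma idsum_ge0: "S \<subseteq> Ehat q \<Longrightarrow> y \<in> idsum S \<Longrightarrow> gmul y (ge0 :: 'g \<Rightarrow> 'a) = 0"
proof -
  assume S: "S \<subseteq> Ehat q" and "y \<in> idsum S"
  then obtain s where y: "y = (\<Sum>e\<in>S. gmul (s e) e)" unfolding idsum_def by auto
  have "gmul y ge0 = gmul ge0 y" by (rule gmul_comm)
  also have "\<dots> = (\<Sum>e\<in>S. gmul ge0 (gmul (s e) e))" unfolding y by (rule G.m_sum)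
  also have "\<dots> = (\<Sum>e\<in>S. gmul (s e) (gmul e ge0))"
  proof (intro sum.cong refl)
    fix e
    have "gmul ge0 (gmul (s e) e) = gmul (s e) (gmul ge0 e)" by (rule G.m_lc)
    also have "gmul ge0 e = gmul e ge0" by (rule gmul_comm)
    finally show "gmul ge0 (gmul (s e) e) = gmul (s e) (gmul e ge0)" .
  qed
  also have "\<dots> = 0" using S EH0' by (intro sum.neutral) auto
  finally show ?thesis .
qed

definition delt :: "'g \<Rightarrow> 'g \<Rightarrow> 'a" where "delt g = (\<lambda>h. if h = g then 1 else 0)"

lemma span_K:
  assumes "gmul y ge0 = (0 :: 'g \<Rightarrow> 'a)"
  shows "y \<in> GV.span ((\<lambda>g. delt g - delt 0) ` (UNIV - {0}))"
proof -
  have "sum y UNIV * inverse (of_nat CARD('g)) = 0"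
    using assms by (simp add: gmul_ge0 fun_eq_iff)
  hence sy: "sum y UNIV = 0" using n0 by simp
  have "y = (\<Sum>g\<in>UNIV - {0}. gscale (y g) (delt g - delt 0))"
  proof
    fix h :: 'g
    have "(\<Sum>g\<in>UNIV - {0}. gscale (y g) (delt g - delt 0)) h
        = (\<Sum>g\<in>UNIV - {0}. y g * ((if h = g then 1 else 0) - (if h = 0 then 1 else 0)))"
      by (simp add: sum_fun_apply gscale_def delt_def)
    also have "\<dots> = y h"
    proof (cases "h = 0")
      case True
      have "(\<Sum>g\<in>UNIV - {0}. y g * ((if h = g then 1 else 0) - (if h = 0 then 1 else 0)))
          = - (\<Sum>g\<in>UNIV - {0}. y g)" using True by (simp add: sum_negf)
      also have "(\<Sum>g\<in>UNIV - {0}. y g) = sum y UNIV - y 0"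
        by (simp add: sum_diff1)
      finally show ?thesis using sy True by simp
    next
      case False
      have "(\<Sum>g\<in>UNIV - {0}. y g * ((if h = g then 1 else 0) - (if h = 0 then 1 else 0)))
          = (\<Sum>g\<in>UNIV - {0}. if g = h then y h else 0)"
        using False by (intro sum.cong) auto
      also have "\<dots> = y h" using False by simp
      finally show ?thesis .
    qed
    finally show "y h = (\<Sum>g\<in>UNIV - {0}. gscale (y g) (delt g - delt 0)) h" by simp
  qed
  also have "\<dots> \<in> GV.span ((\<lambda>g. delt g - delt 0) ` (UNIV - {0}))"
    by (intro GV.span_sum GV.span_scale GV.span_base) auto
  finally show ?thesis .
qed

lemma dim_bound: "S \<subseteq> Ehat q \<Longrightarrow> gdim (idsum S :: ('g \<Rightarrow> 'a) set) < CARD('g)"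
proof -
  assume S: "S \<subseteq> Ehat q"
  let ?W = "(\<lambda>g. delt g - delt 0) ` (UNIV - {0::'g}) :: ('g \<Rightarrow> 'a) set"
  have "idsum S \<subseteq> GV.span ?W" using idsum_ge0[OF S] span_K by blast
  hence "gdim (idsum S) \<le> card ?W" unfolding gdim_GV by (intro GV.dim_le_card) auto
  also have "\<dots> \<le> card (UNIV - {0::'g})" by (rule card_image_le) simp
  also have "\<dots> < CARD('g)" by (simp add: card_Diff_singleton)
  finally show ?thesis .
qed

lemma gideal_sub: "eh \<in> S \<Longrightarrow> gideal eh \<subseteq> idsum (S :: ('g \<Rightarrow> 'a) set)"
proof
  fix z assume eh: "eh \<in> S" and "z \<in> gideal eh"
  then obtain t where z: "z = gmul t eh" unfolding gideal_def by auto
  have "(\<Sum>e\<in>S. gmul (if e = eh then t else 0) e) = (\<Sum>e\<in>S. if e = eh then gmul t eh else 0)"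
    by (rule sum.cong) auto
  also have "\<dots> = gmul t eh" using eh by simp
  finally have "gmul t eh = (\<Sum>e\<in>S. gmul (if e = eh then t else 0) e)" by simp
  then show "z \<in> idsum S" unfolding idsum_def z mem_Collect_eq
    by (intro exI[of _ "\<lambda>e. if e = eh then t else 0"]) simp
qed

lemma dim_mono': "A \<subseteq> B \<Longrightarrow> gdim (A :: ('g \<Rightarrow> 'a) set) \<le> gdim B"
proof -
  assume AB: "A \<subseteq> B"
  obtain Bs where Bs: "Bs \<subseteq> B" "GV.independent Bs" "B \<subseteq> GV.span Bs" "card Bs = GV.dim B"
    by (rule GV.basis_exists)
  have "GV.dim A \<le> card Bs" using AB Bs by (intro GV.dim_le_card) auto
  then show ?thesis using Bs unfolding gdim_GV by simp
qed

end

theorem lemma3p11: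
  fixes q :: nat and lam :: "'a::{field,finite}" and \<delta> :: real
  assumes "\<exists>p k. prime p \<and> k > 0 \<and> q = p ^ k"
    and "CARD('a) = q ^ 2"
    and "odd CARD('g::{ab_group_add,finite})"
    and "coprime CARD('g) q"
    and "lam \<noteq> 0" and "lam \<noteq> 1"
    and "0 \<le> \<delta>" and "\<delta> \<le> 1 - 1 / real q"
  shows "(Dle q lam \<delta> :: (('g \<Rightarrow> 'a) \<times> ('g \<Rightarrow> 'a)) set set)
     \<subseteq> (\<Union>l \<in> {l. mu TYPE('g) TYPE('a) \<le> l \<and> l < CARD('g)}.
           \<Union>J \<in> Omega q l. \<Union>(a, b) \<in> pairs_le q J \<delta>. Dab q lam a b)"
proof -
  obtain p k where pk: "prime p" "k > 0" "q = p ^ k" using assms(1) by blast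
  have q0: "q > 0" using pk prime_gt_0_nat by simp
  have finA: "finite (UNIV :: 'a set)" by simp
  have charpos: "CHAR('a) > 0" by (rule finite_imp_CHAR_pos[OF finA])
  have charprime: "prime CHAR('a)" using prime_CHAR_semidom charpos by blast
  have "CHAR('a) dvd CARD('a)" by (rule CHAR_dvd_CARD)
  hence "CHAR('a) dvd p ^ (k * 2)" using assms(2) pk by (simp add: power_mult)
  hence "CHAR('a) dvd p" using charprime prime_dvd_power by blast
  hence charp: "CHAR('a) = p" using charprime pk(1) primes_dvd_imp_eq by blast
  have frob: "(x + y)^q = x^q + y^q" for x y :: 'a
    by (rule freshmans_dream'[OF charprime]) (simp add: charp pk)
  have invol: "(x^q)^q = x" for x :: 'a
  proof -
    have "(x^q)^q = x ^ CARD('a)" by (simp add: assms(2) power_mult[symmetric] power2_eq_square)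
    also have "\<dots> = x" by (rule field_power_card)
    finally show ?thesis .
  qed
  have n0: "of_nat CARD('g) \<noteq> (0::'a)"
  proof
    assume "of_nat CARD('g) = (0::'a)"
    hence "CHAR('a) dvd CARD('g)" by (simp add: of_nat_eq_0_iff_char_dvd)
    hence "p dvd CARD('g)" by (simp add: charp)
    moreover have "p dvd q" using pk by simp
    ultimately have "is_unit p" using assms(4) coprime_common_divisor by blast
    with pk(1) show False by simp
  qed
  have npos: "CARD('g) > 0" by simp
  note decomp' = decomp[OF q0 frob invol n0]
  note inJt' = inJt[OF q0 frob invol n0]
  note dim_bound' = dim_bound[OF q0 frob invol n0]
  note gideal_sub' = gideal_sub[OF q0 frob invol n0]
  note dim_mono'' = dim_mono'[OF q0 frob invol n0]
  note Ehat_sub'' = Ehat_sub'[OF q0 frob invol n0]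
  show ?thesis
  proof
    fix C :: "(('g \<Rightarrow> 'a) \<times> ('g \<Rightarrow> 'a)) set"
    assume CD: "C \<in> Dle q lam \<delta>"
    then have CDl: "C \<in> Dl q lam" and rd: "reldist C \<le> \<delta>" unfolding Dle_def by auto
    then obtain \<beta> where C: "C = code (gscalar 1) \<beta>" and hb: "gmul \<beta> (gtau q \<beta>) = gscalar (lam - 1)"
      unfolding Dl_def by auto
    have Ceq: "C = {(s, gmul s \<beta>) | s. True}" unfolding C code_def by (simp add: G.m_unit_right)
    have lamfact: "gmul (gmul x \<beta>) (gtau q \<beta>) = (\<lambda>g. x g * (lam - 1))" for x
      by (simp add: G.m_assoc hb gmul_scalar_right)
    have bz: "x = 0" if "gmul x \<beta> = 0" for x
    proof -
      have "(\<lambda>g. x g * (lam - 1)) = 0" using lamfact[of x] that by simp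
      then show ?thesis using assms(6) by (simp add: fun_eq_iff)
    qed
    define V where "V = {c \<in> C. c \<noteq> (0, 0)}"
    define f where "f = (\<lambda>c :: ('g \<Rightarrow> 'a) \<times> ('g \<Rightarrow> 'a). real (wt2 c) / (2 * real CARD('g)))"
    have "{real (wt2 c) / (2 * real CARD('g)) | c. c \<in> C \<and> c \<noteq> (0, 0)} = f ` V"
      unfolding f_def V_def by blast
    hence rdV: "reldist C = Min (f ` V)" unfolding reldist_def by simp
    have "(gscalar 1, \<beta>) \<in> V" unfolding V_def Ceq using gscalar1_nz by (auto simp: gmul_unit)
    hence "f ` V \<noteq> {}" by auto
    moreover have "finite (f ` V)" by simp
    ultimately have "Min (f ` V) \<in> f ` V" by (rule Min_in[rotated])
    then obtain c where cV: "c \<in> V" and fc: "f c = reldist C" using rdV by auto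
    then obtain s where cs: "c = (s, gmul s \<beta>)" unfolding V_def Ceq by auto
    have s0: "s \<noteq> 0" using cV cs unfolding V_def by auto
    define b where "b = gmul s \<beta>"
    have wle: "real (wt2 (s, b)) \<le> 2 * real CARD('g) * \<delta>"
    proof -
      have "real (wt2 (s, b)) / (2 * real CARD('g)) \<le> \<delta>" using fc rd cs unfolding f_def b_def by simp
      then show ?thesis using npos by (simp add: divide_le_eq mult.commute)
    qed
    define S where "S = {e \<in> Ehat q. gmul e s \<noteq> 0}"
    define J where "J = idsum S"
    define l where "l = gdim J"
    have SE: "S \<subseteq> Ehat q" unfolding S_def by auto
    have Ls: "Lset q s = J" unfolding J_def S_def Lset_def ..
    have Lb: "Lset q b = J"
    proof -
      have "{e \<in> Ehat q. gmul e b \<noteq> 0} = S"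
      proof -
        have "gmul e b = 0 \<longleftrightarrow> gmul e s = 0" for e
        proof
          assume "gmul e b = 0"
          hence "gmul (gmul e s) \<beta> = 0" unfolding b_def by (simp add: G.m_assoc)
          thus "gmul e s = 0" by (rule bz)
        next
          assume "gmul e s = 0"
          thus "gmul e b = 0" unfolding b_def by (simp flip: G.m_assoc)
        qed
        then show ?thesis unfolding S_def by auto
      qed
      then show ?thesis unfolding Lset_def J_def by simp
    qed
    have sJ: "s \<in> Jstar q J" unfolding Jstar_def using inJt'[of s] Ls by simp
    have bJ: "b \<in> Jstar q J" unfolding Jstar_def using inJt'[of b] Lb by simp
    have pairs: "(s, b) \<in> pairs_le q J \<delta>" unfolding pairs_le_def using sJ bJ wle by simp
    have inDab: "C \<in> Dab q lam s b" unfolding Dab_def using CDl cV cs b_def unfolding V_def by simp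
    have JO: "J \<in> Omega q l" unfolding Omega_def l_def J_def using SE by blast
    have lt: "l < CARD('g)" unfolding l_def J_def by (rule dim_bound'[OF SE])
    have Sne: "S \<noteq> {}"
    proof
      assume Se: "S = {}"
      have "(\<Sum>e\<in>Ehat q. gmul s e) = 0"
        using Se unfolding S_def by (intro sum.neutral) (auto simp: gmul_comm)
      hence sge: "s = gmul s ge0" using decomp'[of s] by simp
      define cs where "cs = sum s UNIV * inverse (of_nat CARD('g) :: 'a)"
      have sc: "s = (\<lambda>_. cs)" using sge unfolding cs_def by (simp add: gmul_ge0)
      have cs0: "cs \<noteq> 0" using s0 sc by auto
      have bg: "b = gmul (gmul s \<beta>) ge0"
        unfolding b_def by (subst sge) (metis G.m_assoc gmul_comm)
      define cb where "cb = sum b UNIV * inverse (of_nat CARD('g) :: 'a)"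
      have bc: "b = (\<lambda>_. cb)" using bg unfolding cb_def b_def by (simp add: gmul_ge0)
      have "b \<noteq> 0" using bz s0 unfolding b_def by blast
      hence cb0: "cb \<noteq> 0" using bc by auto
      have "wt2 (s, b) = 2 * CARD('g)" unfolding wt2_def using sc bc cs0 cb0 by (simp add: wt_const)
      hence "2 * real CARD('g) \<le> 2 * real CARD('g) * \<delta>" using wle by simp
      hence "1 \<le> \<delta>" using npos by simp
      moreover have "\<delta> < 1" using assms(8) q0 by (smt (verit) divide_pos_pos of_nat_0_less_iff)
      ultimately show False by simp
    qed
    then obtain eh where ehS: "eh \<in> S" by blast
    then obtain e where e: "prim_idem e" "e \<noteq> ge0" "gmul e eh = e" using Ehat_sub'' SE by blast
    have "gideal e \<subseteq> gideal eh"
    proof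
      fix z assume "z \<in> gideal e"
      then obtain t where "z = gmul t e" unfolding gideal_def by auto
      hence "z = gmul (gmul t e) eh" using e(3) by (simp add: G.m_assoc)
      then show "z \<in> gideal eh" unfolding gideal_def by auto
    qed
    also have "\<dots> \<subseteq> J" unfolding J_def by (rule gideal_sub'[OF ehS])
    finally have "gdim (gideal e) \<le> l" unfolding l_def by (rule dim_mono'')
    moreover have "mu TYPE('g) TYPE('a) \<le> gdim (gideal e)"
      unfolding mu_def using e by (intro Min_le) auto
    ultimately have "mu TYPE('g) TYPE('a) \<le> l" by simp
    with lt JO pairs inDab show "C \<in> (\<Union>l \<in> {l. mu TYPE('g) TYPE('a) \<le> l \<and> l < CARD('g)}.
           \<Union>J \<in> Omega q l. \<Union>(a, b) \<in> pairs_le q J \<delta>. Dab q lam a b)" by blast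
  qed
qed

end
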